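(* Let $n\ge1$, let $p>2$ be an integer, let $P(\partial_z)\in\mathbb{C}[\partial_z]$ ($z\in\mathbb{C}^n$) be a homogeneous partial differential operator of order $p$ with constant coefficients, and let $m$ be a function of order $p$. Then the series $$\sum_{j=0}^{\infty}\frac{P^j(\partial_z)\varphi(z)}{m(j)}t^{pj}$$ is not a generalised integral mean for any Borel measure $\mu$ of compact support in $\mathbb{R}^n$; that is, there is no finite complex Borel measure $\mu$ on $\mathbb{R}^n$ with compact support such that $M_\mu(\varphi;z,t)=\sum_{j\ge0}\frac{P^j(\partial_z)\varphi(z)}{m(j)}t^{pj}$ for all $\varphi$ holomorphic in a neighbourhood of the origin in $\mathbb{C}^n$ (and all $(z,t)$ near the origin).
   Context: A function of order $p>0$ is a function $m$ on $\mathbb{N}_0$ for which there exist $c,C>0$ with $c^j\Gamma(1+pj)\le m(j)\le C^j\Gamma(1+pj)$ for all $j\in\mathbb{N}_0$. For a finite complex Borel measure $\mu$ on $\mathbb{R}^n$ with compact support, the generalised integral mean of $\varphi$ is $M_\mu(\varphi;z,t)=\int_{\mathbb{R}^n}\varphi(z+ty)\,d\mu(y)$, $z\in\mathbb{C}^n$, $t\in\mathbb{C}$. *)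

theory Defs
  imports "HOL-Analysis.Analysis"
begin

definition order_fun :: "nat \<Rightarrow> (nat \<Rightarrow> real) \<Rightarrow> bool" where
  "order_fun p m \<longleftrightarrow> (\<exists>c C. c > 0 \<and> C > 0 \<and>
     (\<forall>j. c ^ j * Gamma (1 + real p * real j) \<le> m j \<and> m j \<le> C ^ j * Gamma (1 + real p * real j)))"

definition holo_on :: "(complex ^ 'n \<Rightarrow> complex) \<Rightarrow> (complex ^ 'n) set \<Rightarrow> bool" where
  "holo_on f S \<longleftrightarrow> open S \<and> (\<forall>z\<in>S. \<exists>D. (f has_derivative D) (at z) \<and>
      (\<forall>(c::complex) v. D (c *s v) = c * D v))"

definition pd :: "'n \<Rightarrow> (complex ^ 'n \<Rightarrow> complex) \<Rightarrow> complex ^ 'n \<Rightarrow> complex" where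
  "pd i f = (\<lambda>z. deriv (\<lambda>w. f (z + axis i w)) 0)"

text \<open>A fixed enumeration of the (finite) index type, used to order mixed partials
  (the order is irrelevant for holomorphic functions).\<close>
definition idx_list :: "'n::finite list" where
  "idx_list = (SOME xs. distinct xs \<and> set xs = UNIV)"

definition mderiv :: "('n::finite \<Rightarrow> nat) \<Rightarrow> (complex ^ 'n \<Rightarrow> complex) \<Rightarrow> complex ^ 'n \<Rightarrow> complex" where
  "mderiv \<alpha> f = foldr (\<lambda>i g. (pd i ^^ \<alpha> i) g) idx_list f"

definition Pop :: "(('n::finite \<Rightarrow> nat) \<Rightarrow> complex) \<Rightarrow> (complex ^ 'n \<Rightarrow> complex) \<Rightarrow> complex ^ 'n \<Rightarrow> complex" where
  "Pop c f = (\<lambda>z. \<Sum>\<alpha>\<in>{\<alpha>. c \<alpha> \<noteq> 0}. c \<alpha> * mderiv \<alpha> f z)"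

definition homog_poly :: "nat \<Rightarrow> (('n::finite \<Rightarrow> nat) \<Rightarrow> complex) \<Rightarrow> bool" where
  "homog_poly p c \<longleftrightarrow> finite {\<alpha>. c \<alpha> \<noteq> 0} \<and> {\<alpha>. c \<alpha> \<noteq> 0} \<noteq> {} \<and>
     (\<forall>\<alpha>. c \<alpha> \<noteq> 0 \<longrightarrow> (\<Sum>i\<in>UNIV. \<alpha> i) = p)"

definition cvec :: "real ^ 'n \<Rightarrow> complex ^ 'n" where
  "cvec y = (\<chi> i. complex_of_real (y $ i))"

text \<open>Generalised integral mean for the complex measure \<open>h d\<mu>\<close>.\<close>
definition gen_mean :: "(real ^ 'n) measure \<Rightarrow> (real ^ 'n \<Rightarrow> complex) \<Rightarrow> (complex ^ 'n \<Rightarrow> complex)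
     \<Rightarrow> complex ^ 'n \<Rightarrow> complex \<Rightarrow> complex" where
  "gen_mean M h \<phi> z t = (\<integral>y. \<phi> (z + t *s cvec y) * h y \<partial>M)"

end

theory Submission
  imports Defs "HOL-Complex_Analysis.Complex_Analysis"
begin


definition lf :: "('n::finite \<Rightarrow> real) \<Rightarrow> complex ^ 'n \<Rightarrow> complex" where
  "lf a z = (\<Sum>i\<in>UNIV. complex_of_real (a i) * z $ i)"

lemma lf_add_axis: "lf a (z + axis i w) = lf a z + complex_of_real (a i) * w"
proof -
  have "lf a (z + axis i w) = (\<Sum>j\<in>UNIV. complex_of_real (a j) * z $ j) +
      (\<Sum>j\<in>UNIV. complex_of_real (a j) * (if j = i then w else 0))"
    unfolding lf_def by (simp add: axis_def algebra_simps sum.distrib)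
  also have "\<dots> = lf a z + complex_of_real (a i) * w"
    by (simp add: lf_def if_distrib cong: if_cong)
  finally show ?thesis .
qed

lemma pd_comp:
  assumes "g holomorphic_on UNIV"
  shows "pd i (\<lambda>z. g (lf a z)) = (\<lambda>z. complex_of_real (a i) * deriv g (lf a z))"
proof
  fix z
  have dg: "(g has_field_derivative deriv g (lf a z + complex_of_real (a i) * 0)) (at (lf a z + complex_of_real (a i) * 0))"
    using assms by (auto intro!: holomorphic_derivI)
  have "((\<lambda>w. g (lf a z + complex_of_real (a i) * w)) has_field_derivative
          deriv g (lf a z + complex_of_real (a i) * 0) * complex_of_real (a i)) (at 0)"
    by (rule DERIV_chain2[of g _ "\<lambda>w. lf a z + complex_of_real (a i) * w", OF dg]) (auto intro!: derivative_eq_intros)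
  then have "deriv (\<lambda>w. g (lf a z + complex_of_real (a i) * w)) 0 = deriv g (lf a z) * complex_of_real (a i)"
    by (auto dest!: DERIV_imp_deriv)
  then show "pd i (\<lambda>z. g (lf a z)) z = complex_of_real (a i) * deriv g (lf a z)"
    unfolding pd_def lf_add_axis by (simp add: mult.commute)
qed

lemma pd_pow:
  assumes "g holomorphic_on UNIV"
  shows "(pd i ^^ r) (\<lambda>z. g (lf a z)) = (\<lambda>z. complex_of_real (a i) ^ r * (deriv ^^ r) g (lf a z))"
proof (induction r)
  case 0
  then show ?case by simp
next
  case (Suc r)
  define G where "G = (\<lambda>w. complex_of_real (a i) ^ r * (deriv ^^ r) g w)"
  have hG: "G holomorphic_on UNIV" unfolding G_def
    using assms by (auto intro!: holomorphic_intros)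
  have dG: "deriv G w = complex_of_real (a i) ^ r * (deriv ^^ Suc r) g w" for w
  proof -
    have "(deriv ^^ r) g field_differentiable at w"
      using holomorphic_higher_deriv[OF assms, of r] 
      by (meson UNIV_I holomorphic_on_imp_differentiable_at open_UNIV)
    then show ?thesis unfolding G_def by (simp add: deriv_cmult)
  qed
  have "(pd i ^^ Suc r) (\<lambda>z. g (lf a z)) = pd i (\<lambda>z. G (lf a z))"
    using Suc by (simp add: G_def)
  also have "\<dots> = (\<lambda>z. complex_of_real (a i) * deriv G (lf a z))"
    by (rule pd_comp[OF hG])
  finally show ?case by (simp add: dG mult.assoc)
qed

lemma foldr_comp:
  assumes "g holomorphic_on UNIV"
  shows "foldr (\<lambda>i g. (pd i ^^ \<alpha> i) g) xs (\<lambda>z. g (lf a z)) =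
    (\<lambda>z. (\<Prod>i\<leftarrow>xs. complex_of_real (a i) ^ \<alpha> i) * (deriv ^^ (\<Sum>i\<leftarrow>xs. \<alpha> i)) g (lf a z))"
proof (induction xs)
  case Nil
  then show ?case by simp
next
  case (Cons x xs)
  define C where "C = (\<Prod>i\<leftarrow>xs. complex_of_real (a i) ^ \<alpha> i)"
  define s where "s = (\<Sum>i\<leftarrow>xs. \<alpha> i)"
  define G where "G = (\<lambda>w. C * (deriv ^^ s) g w)"
  have hG: "G holomorphic_on UNIV" unfolding G_def
    using assms by (auto intro!: holomorphic_intros)
  have "foldr (\<lambda>i g. (pd i ^^ \<alpha> i) g) (x # xs) (\<lambda>z. g (lf a z)) = (pd x ^^ \<alpha> x) (\<lambda>z. G (lf a z))"
    using Cons by (simp add: G_def C_def s_def)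
  also have "\<dots> = (\<lambda>z. complex_of_real (a x) ^ \<alpha> x * (deriv ^^ \<alpha> x) G (lf a z))"
    by (rule pd_pow[OF hG])
  also have "\<dots> = (\<lambda>z. complex_of_real (a x) ^ \<alpha> x * (C * (deriv ^^ (\<alpha> x + s)) g (lf a z)))"
  proof -
    have "(deriv ^^ \<alpha> x) G w = C * (deriv ^^ (\<alpha> x + s)) g w" for w
      unfolding G_def
      by (subst higher_deriv_cmult[of _ UNIV]) (use assms in \<open>auto intro!: holomorphic_intros simp: funpow_add\<close>)
    then show ?thesis by simp
  qed
  finally show ?case by (simp add: C_def s_def mult.assoc)
qed

lemma idx_list_props: "distinct (idx_list :: 'n::finite list) \<and> set (idx_list :: 'n list) = UNIV"
proof -
  have "\<exists>xs. distinct xs \<and> set xs = (UNIV :: 'n set)"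
    using finite_distinct_list[of "UNIV :: 'n set"] by auto
  then show ?thesis unfolding idx_list_def by (rule someI_ex)
qed

definition Pa :: "(('n::finite \<Rightarrow> nat) \<Rightarrow> complex) \<Rightarrow> ('n \<Rightarrow> real) \<Rightarrow> complex" where
  "Pa c a = (\<Sum>\<alpha>\<in>{\<alpha>. c \<alpha> \<noteq> 0}. c \<alpha> * (\<Prod>i\<in>UNIV. complex_of_real (a i) ^ \<alpha> i))"

lemma mderiv_comp:
  assumes "g holomorphic_on UNIV"
  shows "mderiv \<alpha> (\<lambda>z. g (lf a z)) =
    (\<lambda>z. (\<Prod>i\<in>UNIV. complex_of_real (a i) ^ \<alpha> i) * (deriv ^^ (\<Sum>i\<in>UNIV. \<alpha> i)) g (lf a z))"
proof -
  have d: "distinct (idx_list :: 'a list)" and s: "set (idx_list :: 'a list) = UNIV"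
    using idx_list_props by auto
  show ?thesis
    unfolding mderiv_def foldr_comp[OF assms]
    using prod.distinct_set_conv_list[OF d, of "\<lambda>i. complex_of_real (a i) ^ \<alpha> i"]
      sum.distinct_set_conv_list[OF d, of \<alpha>] s by simp
qed

lemma Pop_comp:
  assumes "g holomorphic_on UNIV" "homog_poly p c"
  shows "Pop c (\<lambda>z. g (lf a z)) = (\<lambda>z. Pa c a * (deriv ^^ p) g (lf a z))"
proof
  fix z
  have "Pop c (\<lambda>z. g (lf a z)) z = (\<Sum>\<alpha>\<in>{\<alpha>. c \<alpha> \<noteq> 0}. c \<alpha> *
      ((\<Prod>i\<in>UNIV. complex_of_real (a i) ^ \<alpha> i) * (deriv ^^ p) g (lf a z)))"
    unfolding Pop_def mderiv_comp[OF assms(1)]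
    using assms(2) unfolding homog_poly_def by (intro sum.cong) auto
  also have "\<dots> = Pa c a * (deriv ^^ p) g (lf a z)"
    unfolding Pa_def sum_distrib_right by (simp add: mult.assoc)
  finally show "Pop c (\<lambda>z. g (lf a z)) z = Pa c a * (deriv ^^ p) g (lf a z)" .
qed

lemma Pop_iter:
  assumes "g holomorphic_on UNIV" "homog_poly p c"
  shows "(Pop c ^^ j) (\<lambda>z. g (lf a z)) = (\<lambda>z. Pa c a ^ j * (deriv ^^ (p * j)) g (lf a z))"
proof (induction j)
  case 0
  then show ?case by simp
next
  case (Suc j)
  define G where "G = (\<lambda>w. Pa c a ^ j * (deriv ^^ (p * j)) g w)"
  have hG: "G holomorphic_on UNIV" unfolding G_def
    using assms by (auto intro!: holomorphic_intros)
  have "(Pop c ^^ Suc j) (\<lambda>z. g (lf a z)) = Pop c (\<lambda>z. G (lf a z))"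
    using Suc by (simp add: G_def)
  also have "\<dots> = (\<lambda>z. Pa c a * (deriv ^^ p) G (lf a z))"
    by (rule Pop_comp[OF hG assms(2)])
  also have "\<dots> = (\<lambda>z. Pa c a ^ Suc j * (deriv ^^ (p * Suc j)) g (lf a z))"
  proof -
    have "(deriv ^^ p) G w = Pa c a ^ j * (deriv ^^ (p * Suc j)) g w" for w
      unfolding G_def
      by (subst higher_deriv_cmult[of _ UNIV]) (use assms in \<open>auto intro!: holomorphic_intros simp: funpow_add add.commute\<close>)
    then show ?thesis by (simp add: mult.assoc)
  qed
  finally show ?case .
qed

lemma higher_deriv_pow0: "(deriv ^^ r) (\<lambda>w. w ^ k) (0::complex) = (if r = k then fact k else 0)"
proof -
  have "(deriv ^^ r) (\<lambda>w. (w - 0) ^ k) (0::complex) = pochhammer (of_nat (Suc k - r)) r * (0 - 0) ^ (k - r)"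
    by (rule higher_deriv_power)
  then show ?thesis
    by (cases "r < k"; cases "r = k") (auto simp: pochhammer_fact pochhammer_0_left)
qed



lemma root_trick:
  assumes "p \<ge> 2"
  shows "root p (s ^ p) ^ (p - 2) = (s::real) ^ (p - 2)"
proof (cases "odd p")
  case True
  then show ?thesis by (simp add: odd_real_root_power_cancel)
next
  case False
  then have "s ^ p = \<bar>s\<bar> ^ p" by (simp add: power_even_abs)
  then have "root p (s ^ p) = \<bar>s\<bar>" using assms by (simp add: real_root_power_cancel)
  moreover have "\<bar>s\<bar> ^ (p - 2) = s ^ (p - 2)" using False assms by (simp add: power_even_abs)
  ultimately show ?thesis by simp
qed

lemma one_d_trick:
  fixes M :: "'a measure" and h :: "'a \<Rightarrow> complex" and s :: "'a \<Rightarrow> real"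
  assumes h: "integrable M h" and sm: "s \<in> borel_measurable M"
    and R: "AE y in M. \<bar>s y\<bar> \<le> R" and R0: "0 \<le> R" and p: "p \<ge> 3"
    and van: "\<And>k. \<not> p dvd k \<Longrightarrow> (\<integral>y. complex_of_real (s y) ^ k * h y \<partial>M) = 0"
  shows "(\<integral>y. complex_of_real (s y) ^ p * h y \<partial>M) = 0"
proof -
  define mom where "mom k = (\<integral>y. complex_of_real (s y) ^ k * h y \<partial>M)" for k
  have int: "integrable M (\<lambda>y. complex_of_real (s y) ^ k * h y)" for k
  proof (rule Bochner_Integration.integrable_bound[of _ "\<lambda>y. complex_of_real (R ^ k) * h y"])
    show "integrable M (\<lambda>y. complex_of_real (R ^ k) * h y)" using h by auto
    show "(\<lambda>y. complex_of_real (s y) ^ k * h y) \<in> borel_measurable M"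
      using sm h by measurable
    show "AE x in M. norm (complex_of_real (s x) ^ k * h x) \<le> norm (complex_of_real (R ^ k) * h x)"
      using R proof eventually_elim
      case (elim x)
      then have "\<bar>s x\<bar> ^ k \<le> R ^ k" by (intro power_mono) auto
      then show ?case using R0
        by (auto simp: norm_mult norm_power intro!: mult_right_mono)
    qed
  qed
  define L where "L = (\<integral>y. norm (h y) \<partial>M)"
  have L0: "0 \<le> L" unfolding L_def by simp
  have bound: "norm (mom p) \<le> e" if e: "e > 0" for e
  proof -
    define d where "d = e / (R^2 * L + 1)"
    have d0: "d > 0" unfolding d_def using e R0 L0 by (auto intro!: divide_pos_pos add_nonneg_pos)
    have cont: "continuous_on {-(R^p)..R^p} (\<lambda>u. root p u ^ (p - 2))"
      by (intro continuous_intros)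
    obtain g where g: "real_polynomial_function g"
      and gapp: "\<And>u. u \<in> {-(R^p)..R^p} \<Longrightarrow> \<bar>root p u ^ (p - 2) - g u\<bar> < d"
      using Stone_Weierstrass_real_polynomial_function[OF compact_Icc cont d0] by blast
    obtain q n where gq: "g = (\<lambda>x. \<Sum>i\<le>n. q i * x ^ i)"
      using g real_polynomial_function_iff_sum by blast
    define E where "E y = complex_of_real (s y) ^ p * h y -
        (\<Sum>i\<le>n. complex_of_real (q i) * (complex_of_real (s y) ^ (p * i + 2) * h y))" for y
    have intE: "(\<integral>y. E y \<partial>M) = mom p - (\<Sum>i\<le>n. complex_of_real (q i) * mom (p * i + 2))"
    proof -
      have i1: "integrable M (\<lambda>y. \<Sum>i\<le>n. complex_of_real (q i) * (complex_of_real (s y) ^ (p * i + 2) * h y))"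
        by (rule Bochner_Integration.integrable_sum, rule integrable_mult_right, rule int)
      have "(\<integral>y. E y \<partial>M) = mom p - (\<integral>y. (\<Sum>i\<le>n. complex_of_real (q i) * (complex_of_real (s y) ^ (p * i + 2) * h y)) \<partial>M)"
        unfolding E_def mom_def by (rule Bochner_Integration.integral_diff[OF int i1])
      also have "(\<integral>y. (\<Sum>i\<le>n. complex_of_real (q i) * (complex_of_real (s y) ^ (p * i + 2) * h y)) \<partial>M)
          = (\<Sum>i\<le>n. complex_of_real (q i) * mom (p * i + 2))"
        unfolding mom_def by (subst Bochner_Integration.integral_sum) (auto simp del: power_Suc power_add intro!: integrable_mult_right int)
      finally show ?thesis .
    qed
    also have "\<dots> = mom p"
    proof -
      have "\<not> p dvd (p * i + 2)" for i
      proof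
        assume "p dvd p * i + 2"
        then have "p dvd 2" using dvd_add_right_iff[of p "p * i" 2] by simp
        then show False using p by (auto dest: dvd_imp_le)
      qed
      then have "mom (p * i + 2) = 0" for i unfolding mom_def using van by blast
      then show ?thesis by simp
    qed
    finally have eq: "(\<integral>y. E y \<partial>M) = mom p" .
    have Eform: "E y = complex_of_real ((s y) ^ p - (s y)^2 * g ((s y) ^ p)) * h y" for y
    proof -
      have "(s y)^2 * g ((s y) ^ p) = (\<Sum>i\<le>n. q i * (s y) ^ (p * i + 2))"
        unfolding gq sum_distrib_left
        by (intro sum.cong) (auto simp: power_add power_mult power2_eq_square)
      then show ?thesis unfolding E_def
        by (simp add: sum_distrib_right sum_distrib_left algebra_simps)
    qed
    have Ebd: "AE y in M. norm (E y) \<le> R^2 * d * norm (h y)"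
      using R proof eventually_elim
      case (elim y)
      let ?s = "s y"
      have sp: "?s ^ p \<in> {-(R^p)..R^p}"
      proof -
        have "\<bar>?s\<bar> ^ p \<le> R ^ p" by (intro power_mono) (use elim in auto)
        then have "\<bar>?s ^ p\<bar> \<le> R ^ p" by (simp add: power_abs)
        then show ?thesis by auto
      qed
      have e2: "2 + (p - 2) = p" using p by simp
      have "?s ^ p = ?s ^ 2 * ?s ^ (p - 2)" by (metis e2 power_add)
      also have "\<dots> = ?s ^ 2 * root p (?s ^ p) ^ (p - 2)" using root_trick[of p ?s] p by simp
      finally have "?s ^ p - ?s^2 * g (?s ^ p) = ?s^2 * (root p (?s ^ p) ^ (p - 2) - g (?s ^ p))"
        by (simp add: right_diff_distrib)
      then have "\<bar>?s ^ p - ?s^2 * g (?s ^ p)\<bar> = ?s^2 * \<bar>root p (?s ^ p) ^ (p - 2) - g (?s ^ p)\<bar>"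
        by (simp add: abs_mult)
      also have "\<dots> \<le> R^2 * d"
      proof (intro mult_mono)
        show "?s^2 \<le> R^2" using elim by (metis abs_le_square_iff abs_of_nonneg R0 dual_order.trans abs_ge_zero power2_abs)
        show "\<bar>root p (?s ^ p) ^ (p - 2) - g (?s ^ p)\<bar> \<le> d" using gapp[OF sp] by simp
      qed (use R0 in auto)
      finally have "norm (complex_of_real ((s y) ^ p - (s y)^2 * g ((s y) ^ p))) \<le> R^2 * d"
        by (simp only: norm_of_real)
      then show ?case unfolding Eform norm_mult
        by (intro mult_right_mono) auto
    qed
    have "norm (mom p) = norm (\<integral>y. E y \<partial>M)" using eq by simp
    also have "\<dots> \<le> (\<integral>y. norm (E y) \<partial>M)" by (rule integral_norm_bound)
    also have "\<dots> \<le> (\<integral>y. R^2 * d * norm (h y) \<partial>M)"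
    proof (rule integral_mono_AE')
      show "integrable M (\<lambda>y. R^2 * d * norm (h y))" using h by auto
      show "AE y in M. norm (E y) \<le> R^2 * d * norm (h y)" by (rule Ebd)
      show "AE y in M. 0 \<le> R^2 * d * norm (h y)" using d0 by (intro AE_I2) auto
    qed
    also have "\<dots> = R^2 * d * L" unfolding L_def by simp
    also have "\<dots> \<le> e"
    proof -
      have "R^2 * d * L = e * (R^2 * L) / (R^2 * L + 1)" unfolding d_def by (simp add: field_simps)
      also have "\<dots> \<le> e"
      proof -
        have X: "0 \<le> R^2 * L" using L0 by simp
        have "e * (R^2 * L) \<le> e * (R^2 * L + 1)" using e by simp
        then show ?thesis using X by (simp add: divide_le_eq)
      qed
      finally show ?thesis .
    qed
    finally show ?thesis .
  qed
  have "norm (mom p) = 0"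
  proof (rule ccontr)
    assume "norm (mom p) \<noteq> 0"
    then have "norm (mom p) > 0" by simp
    from bound[of "norm (mom p) / 2"] this show False by simp
  qed
  then show ?thesis unfolding mom_def by simp
qed



lemma digits_unique:
  fixes D D' :: "nat \<Rightarrow> nat"
  assumes "b > 0" "\<And>m. D m < b" "\<And>m. D' m < b"
    "(\<Sum>m<N. D m * b ^ m) = (\<Sum>m<N. D' m * b ^ m)"
  shows "\<forall>m<N. D m = D' m"
  using assms(2-4)
proof (induction N arbitrary: D D')
  case 0
  then show ?case by simp
next
  case (Suc N)
  have e1: "(\<Sum>m<Suc N. D m * b ^ m) = D 0 + b * (\<Sum>m<N. D (Suc m) * b ^ m)" for D :: "nat \<Rightarrow> nat"
    unfolding sum.lessThan_Suc_shift by (simp add: sum_distrib_left mult.assoc mult.left_commute)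
  have eq: "D 0 + b * (\<Sum>m<N. D (Suc m) * b ^ m) = D' 0 + b * (\<Sum>m<N. D' (Suc m) * b ^ m)"
    using Suc.prems(3) unfolding e1 .
  have d0: "D 0 = D' 0"
  proof -
    have "(D 0 + b * (\<Sum>m<N. D (Suc m) * b ^ m)) mod b = D 0" using Suc.prems(1)[of 0] by simp
    moreover have "(D' 0 + b * (\<Sum>m<N. D' (Suc m) * b ^ m)) mod b = D' 0" using Suc.prems(2)[of 0] by simp
    ultimately show ?thesis using eq by simp
  qed
  then have "(\<Sum>m<N. D (Suc m) * b ^ m) = (\<Sum>m<N. D' (Suc m) * b ^ m)"
    using eq assms(1) by simp
  then have "\<forall>m<N. D (Suc m) = D' (Suc m)"
    using Suc.IH[of "\<lambda>m. D (Suc m)" "\<lambda>m. D' (Suc m)"] Suc.prems by blast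
  then show ?case using d0 by (auto simp: less_Suc_eq_0_disj)
qed

lemma Pa_nonzero:
  fixes c :: "('n::finite \<Rightarrow> nat) \<Rightarrow> complex"
  assumes hp: "homog_poly p c"
  shows "\<exists>a. Pa c a \<noteq> 0"
proof (rule ccontr)
  assume "\<not> (\<exists>a. Pa c a \<noteq> 0)"
  then have P0: "\<And>a. Pa c a = 0" by blast
  define S where "S = {\<alpha>. c \<alpha> \<noteq> 0}"
  have finS: "finite S" and neS: "S \<noteq> {}" and degS: "\<And>\<alpha>. \<alpha> \<in> S \<Longrightarrow> (\<Sum>i\<in>UNIV. \<alpha> i) = p"
    using hp unfolding homog_poly_def S_def by auto
  obtain k :: "'n \<Rightarrow> nat" where injk: "inj k"
    using finite_imp_inj_to_nat_seg[of "UNIV :: 'n set"] by auto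
  define b where "b = Suc p"
  define e where "e \<alpha> = (\<Sum>i\<in>UNIV. \<alpha> i * b ^ k i)" for \<alpha> :: "'n \<Rightarrow> nat"
  have small: "\<alpha> i < b" if "\<alpha> \<in> S" for \<alpha> i
  proof -
    have "\<alpha> i \<le> (\<Sum>i\<in>UNIV. \<alpha> i)" by (rule member_le_sum) auto
    then show ?thesis using degS[OF that] unfolding b_def by simp
  qed
  define N where "N = Suc (Max (range k))"
  have kN: "k i < N" for i unfolding N_def by (simp add: le_imp_less_Suc)
  define Dg where "Dg \<alpha> m = (if m \<in> range k then \<alpha> (inv k m) else 0)" for \<alpha> :: "'n \<Rightarrow> nat" and m
  have eD: "e \<alpha> = (\<Sum>m<N. Dg \<alpha> m * b ^ m)" for \<alpha>
  proof -
    have "e \<alpha> = (\<Sum>m\<in>range k. \<alpha> (inv k m) * b ^ m)"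
      unfolding e_def using injk by (simp add: sum.reindex)
    also have "\<dots> = (\<Sum>m\<in>range k. Dg \<alpha> m * b ^ m)" unfolding Dg_def by simp
    also have "\<dots> = (\<Sum>m<N. Dg \<alpha> m * b ^ m)"
      by (rule sum.mono_neutral_left) (auto simp: kN Dg_def)
    finally show ?thesis .
  qed
  have inje: "inj_on e S"
  proof
    fix \<alpha> \<beta> assume ab: "\<alpha> \<in> S" "\<beta> \<in> S" "e \<alpha> = e \<beta>"
    have "\<forall>m<N. Dg \<alpha> m = Dg \<beta> m"
      by (rule digits_unique[of b]) (use ab small in \<open>auto simp: b_def Dg_def eD\<close>)
    then have "\<alpha> i = \<beta> i" for i using kN[of i] injk by (auto simp: Dg_def)
    then show "\<alpha> = \<beta>" by auto
  qed
  define Cf where "Cf m = (if m \<in> e ` S then c (inv_into S e m) else 0)" for m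
  define NN where "NN = Max (e ` S)"
  have poly: "Pa c (\<lambda>i. x ^ (b ^ k i)) = (\<Sum>m\<le>NN. Cf m * complex_of_real x ^ m)" for x
  proof -
    have "Pa c (\<lambda>i. x ^ (b ^ k i)) = (\<Sum>\<alpha>\<in>S. c \<alpha> * complex_of_real x ^ e \<alpha>)"
    proof -
      have "(\<Prod>i\<in>UNIV. complex_of_real (x ^ b ^ k i) ^ \<alpha> i) = complex_of_real x ^ e \<alpha>" for \<alpha>
      proof -
        have "(\<Prod>i\<in>UNIV. complex_of_real (x ^ b ^ k i) ^ \<alpha> i) = (\<Prod>i\<in>UNIV. complex_of_real x ^ (\<alpha> i * b ^ k i))"
          by (intro prod.cong refl) (metis of_real_power power_mult mult.commute)
        then show ?thesis unfolding e_def power_sum by simp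
      qed
      then show ?thesis unfolding Pa_def S_def[symmetric] by simp
    qed
    also have "\<dots> = (\<Sum>m\<in>e ` S. Cf m * complex_of_real x ^ m)"
      using inje by (simp add: sum.reindex Cf_def)
    also have "\<dots> = (\<Sum>m\<le>NN. Cf m * complex_of_real x ^ m)"
      by (rule sum.mono_neutral_left) (auto simp: NN_def Cf_def finS)
    finally show ?thesis .
  qed
  obtain \<alpha>0 where a0: "\<alpha>0 \<in> S" using neS by auto
  have "Cf (e \<alpha>0) \<noteq> 0" using a0 inje unfolding Cf_def S_def by auto
  moreover have "e \<alpha>0 \<le> NN" unfolding NN_def using a0 finS by auto
  ultimately have fin: "finite {z. (\<Sum>m\<le>NN. Cf m * z ^ m) = 0}"
    using polyfun_rootbound by blast
  have "range complex_of_real \<subseteq> {z. (\<Sum>m\<le>NN. Cf m * z ^ m) = 0}"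
    using P0 poly by (auto simp flip: poly)
  moreover have "infinite (range complex_of_real)"
  proof
    assume "finite (range complex_of_real)"
    then have "finite (UNIV :: real set)" using finite_imageD inj_of_real by blast
    then show False using infinite_UNIV_char_0 by blast
  qed
  ultimately show False using fin finite_subset by blast
qed



lemma lf_linear: "lf a (c *s v) = c * lf a v" "lf a 0 = 0"
  unfolding lf_def by (auto simp: sum_distrib_left algebra_simps)

lemma lf_deriv: "(lf a has_derivative lf a) (at z)"
proof -
  have "((\<lambda>z. \<Sum>i\<in>UNIV. complex_of_real (a i) * z $ i) has_derivative
         (\<lambda>v. \<Sum>i\<in>UNIV. complex_of_real (a i) * v $ i)) (at z)"
    by (auto intro!: derivative_eq_intros bounded_linear.has_derivative[OF bounded_linear_vec_nth])
  then show ?thesis unfolding lf_def[abs_def] .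
qed

lemma holo_pow: "holo_on (\<lambda>z. lf a z ^ k) UNIV"
  unfolding holo_on_def
proof (intro conjI ballI open_UNIV exI)
  fix z
  have "((\<lambda>w. w ^ k) has_derivative (\<lambda>x. (of_nat k * lf a z ^ (k - 1)) * x)) (at (lf a z))"
  proof -
    have "((\<lambda>w::complex. w ^ k) has_field_derivative of_nat k * lf a z ^ (k - 1)) (at (lf a z))"
      by (auto intro!: derivative_eq_intros)
    then show ?thesis by (rule has_field_derivative_imp_has_derivative)
  qed
  from has_derivative_compose[OF lf_deriv this]
  show "((\<lambda>z. lf a z ^ k) has_derivative (\<lambda>v. (of_nat k * lf a z ^ (k - 1)) * lf a v)) (at z)" .
  show "\<forall>(c::complex) v. (of_nat k * lf a z ^ (k - 1)) * lf a (c *s v) = c * ((of_nat k * lf a z ^ (k - 1)) * lf a v)"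
    by (simp add: lf_linear)
qed

lemma lf_cvec: "lf a (t *s cvec y) = t * complex_of_real (\<Sum>i\<in>UNIV. a i * y $ i)"
  unfolding lf_def cvec_def by (simp add: sum_distrib_left algebra_simps)

theorem theorem3:
  fixes c :: "('n::finite \<Rightarrow> nat) \<Rightarrow> complex" and p :: nat and m :: "nat \<Rightarrow> real"
  assumes "p > 2" and "homog_poly p c" and "order_fun p m"
  shows "\<not> (\<exists>(M :: (real ^ 'n) measure) (h :: real ^ 'n \<Rightarrow> complex).
            finite_measure M \<and> sets M = sets borel \<and>
            (\<exists>K. compact K \<and> emeasure M (UNIV - K) = 0) \<and>
            integrable M h \<and>
            (\<forall>\<phi> U. 0 \<in> U \<longrightarrow> holo_on \<phi> U \<longrightarrow>
               (\<exists>\<epsilon>>0. \<forall>z t. norm z < \<epsilon> \<longrightarrow> norm t < \<epsilon> \<longrightarrow>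
                  (\<lambda>j. ((Pop c ^^ j) \<phi> z / complex_of_real (m j)) * t ^ (p * j))
                    sums gen_mean M h \<phi> z t)))"
proof
  assume "\<exists>(M :: (real ^ 'n) measure) (h :: real ^ 'n \<Rightarrow> complex).
            finite_measure M \<and> sets M = sets borel \<and>
            (\<exists>K. compact K \<and> emeasure M (UNIV - K) = 0) \<and>
            integrable M h \<and>
            (\<forall>\<phi> U. 0 \<in> U \<longrightarrow> holo_on \<phi> U \<longrightarrow>
               (\<exists>\<epsilon>>0. \<forall>z t. norm z < \<epsilon> \<longrightarrow> norm t < \<epsilon> \<longrightarrow>
                  (\<lambda>j. ((Pop c ^^ j) \<phi> z / complex_of_real (m j)) * t ^ (p * j))
                    sums gen_mean M h \<phi> z t))"
  then obtain M :: "(real ^ 'n) measure" and h :: "real ^ 'n \<Rightarrow> complex" and K where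
    sM: "sets M = sets borel" and K: "compact K" "emeasure M (UNIV - K) = 0" and
    hint: "integrable M h" and
    H: "\<And>\<phi> U. 0 \<in> U \<Longrightarrow> holo_on \<phi> U \<Longrightarrow>
               (\<exists>\<epsilon>>0. \<forall>z t. norm z < \<epsilon> \<longrightarrow> norm t < \<epsilon> \<longrightarrow>
                  (\<lambda>j. ((Pop c ^^ j) \<phi> z / complex_of_real (m j)) * t ^ (p * j))
                    sums gen_mean M h \<phi> z t)"
    by blast
  define sr where "sr a y = (\<Sum>i\<in>UNIV. a i * y $ i)" for a :: "'n \<Rightarrow> real" and y :: "real ^ 'n"
  define mom where "mom a k = (\<integral>y. complex_of_real (sr a y) ^ k * h y \<partial>M)" for a k
  have test: "\<exists>t. t \<noteq> 0 \<and> (\<lambda>j. (Pa c a ^ j * (if p * j = k then fact k else 0) / complex_of_real (m j)) * t ^ (p * j))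
     sums (t ^ k * mom a k)" for a k
  proof -
    obtain \<epsilon> where \<epsilon>: "\<epsilon> > 0" and S: "\<And>z t. norm z < \<epsilon> \<Longrightarrow> norm t < \<epsilon> \<Longrightarrow>
        (\<lambda>j. ((Pop c ^^ j) (\<lambda>z. lf a z ^ k) z / complex_of_real (m j)) * t ^ (p * j))
                    sums gen_mean M h (\<lambda>z. lf a z ^ k) z t"
      using H[of UNIV "\<lambda>z. lf a z ^ k"] holo_pow by blast
    define t where "t = complex_of_real (\<epsilon> / 2)"
    have t0: "t \<noteq> 0" and tn: "norm t < \<epsilon>" using \<epsilon> by (auto simp: t_def)
    note S0 = S[of 0 t, OF _ tn]
    have gm: "gen_mean M h (\<lambda>z. lf a z ^ k) 0 t = t ^ k * mom a k"
      unfolding gen_mean_def mom_def sr_def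
      by (simp add: lf_cvec power_mult_distrib mult.assoc)
    have hol: "(\<lambda>w::complex. w ^ k) holomorphic_on UNIV" by (auto intro!: holomorphic_intros)
    have "(Pop c ^^ j) (\<lambda>z. lf a z ^ k) 0 = Pa c a ^ j * (if p * j = k then fact k else 0)" for j
      using Pop_iter[OF hol assms(2), of j a] by (simp add: lf_linear higher_deriv_pow0)
    then show ?thesis using S0 t0 gm \<epsilon> by (intro exI[of _ t]) auto
  qed
  have m1: "m 1 > 0"
  proof -
    obtain c0 where "c0 > 0" "c0 ^ 1 * Gamma (1 + real p * real 1) \<le> m 1"
      using assms(3) unfolding order_fun_def by blast
    moreover have "Gamma (1 + real p * real 1) > 0" by (intro Gamma_real_pos) auto
    ultimately show ?thesis by (smt (verit) mult_pos_pos power_one_right)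
  qed
  have van: "mom a k = 0" if "\<not> p dvd k" for a k
  proof -
    obtain t where t: "t \<noteq> 0" and s: "(\<lambda>j. (Pa c a ^ j * (if p * j = k then fact k else 0) / complex_of_real (m j)) * t ^ (p * j))
     sums (t ^ k * mom a k)" using test by blast
    have "(\<lambda>j. (Pa c a ^ j * (if p * j = k then fact k else 0) / complex_of_real (m j)) * t ^ (p * j)) = (\<lambda>j. 0)"
    proof
      fix j
      have "p * j \<noteq> k" using that by auto
      then show "(Pa c a ^ j * (if p * j = k then fact k else 0) / complex_of_real (m j)) * t ^ (p * j) = 0" by simp
    qed
    then have "t ^ k * mom a k = 0" using s sums_zero sums_unique2 by metis
    then show ?thesis using t by simp
  qed
  have spaceM: "space M = UNIV" using sets_eq_imp_space_eq[OF sM] by simp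
  have AEK: "AE y in M. y \<in> K"
  proof (rule AE_I')
    have "UNIV - K \<in> sets M" unfolding sM using K(1) compact_imp_closed by (intro borel_open open_Diff) auto
    then show "UNIV - K \<in> null_sets M" using K(2) by (simp add: null_sets_def)
  qed (auto simp: spaceM)
  obtain B where B: "B > 0" "\<And>y. y \<in> K \<Longrightarrow> norm y \<le> B"
    using compact_imp_bounded[OF K(1)] bounded_pos by blast
  have Pa0: "Pa c a = 0" for a
  proof -
    define R where "R = (\<Sum>i\<in>UNIV. \<bar>a i\<bar>) * B"
    have R0: "0 \<le> R" unfolding R_def using B by (auto intro!: sum_nonneg)
    have Rb: "AE y in M. \<bar>sr a y\<bar> \<le> R"
      using AEK proof eventually_elim
      case (elim y)
      have "\<bar>sr a y\<bar> \<le> (\<Sum>i\<in>UNIV. \<bar>a i\<bar> * \<bar>y $ i\<bar>)"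
        unfolding sr_def by (rule order_trans[OF sum_abs]) (simp add: abs_mult)
      also have "\<dots> \<le> (\<Sum>i\<in>UNIV. \<bar>a i\<bar> * B)"
        using B(2)[OF elim] component_le_norm_cart
        by (intro sum_mono mult_left_mono) (auto intro: order_trans)
      finally show ?case unfolding R_def by (simp add: sum_distrib_right)
    qed
    have srm: "sr a \<in> borel_measurable M"
      unfolding measurable_cong_sets[OF sM refl] sr_def by measurable
    have mp0: "mom a p = 0"
      unfolding mom_def
      by (rule one_d_trick[OF hint srm Rb R0]) (use assms(1) van in \<open>auto simp: mom_def\<close>)
    obtain t where t: "t \<noteq> 0" and s: "(\<lambda>j. (Pa c a ^ j * (if p * j = p then fact p else 0) / complex_of_real (m j)) * t ^ (p * j))
     sums (t ^ p * mom a p)" using test by blast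
    have "(\<lambda>j. (Pa c a ^ j * (if p * j = p then fact p else 0) / complex_of_real (m j)) * t ^ (p * j))
       = (\<lambda>j. if j = 1 then (Pa c a ^ j * fact p / complex_of_real (m j)) * t ^ (p * j) else 0)"
      using assms(1) by (auto intro!: ext)
    then have "(\<lambda>j. (Pa c a ^ j * (if p * j = p then fact p else 0) / complex_of_real (m j)) * t ^ (p * j))
       sums ((Pa c a * fact p / complex_of_real (m 1)) * t ^ p)"
      using sums_single[of 1 "\<lambda>j. (Pa c a ^ j * fact p / complex_of_real (m j)) * t ^ (p * j)"] by simp
    then have "(Pa c a * fact p / complex_of_real (m 1)) * t ^ p = 0"
      using s mp0 sums_unique2 by force
    then show ?thesis using t m1 by simp
  qed
  then show False using Pa_nonzero[OF assms(2)] by blast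
qed


end
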